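(* Let $D=(-1,1)$, $\nu=1/2$, and $\phi_j(t)=e^{\mathrm{i}j\pi t}$, $j\in\mathbb Z$. Let $T=\{t_n\}_{n=1}^N\subseteq[-1,1]$ be a set of $N$ points such that $t_nP\in\mathbb Z$ for some $P\in\mathbb N$ and all $n=1,\dots,N$. Let $U=\{\phi_j(t_n)\}_{n=1,\dots,N,\ j\in\mathbb Z}$ and $y\in\mathbb C^N$, and suppose $\hat x\in\ell^1(\mathbb Z)$ is a solution of $$\inf_{z\in\ell^1(\mathbb Z)}\|z\|_1\quad\text{subject to } Uz=y.$$ Then for every $k\in\mathbb Z$, the element $z\in\ell^1(\mathbb Z)$ given by $z_i=\hat x_{i-2kP}$, $i\in\mathbb Z$, is also a solution of this problem.
   Context: $U$ is viewed as the linear map $\ell^1(\mathbb Z)\to\mathbb C^N$, $(Uz)_n=\sum_{j\in\mathbb Z}z_j e^{\mathrm i j\pi t_n}$; $\|z\|_1=\sum_{j\in\mathbb Z}|z_j|$. *)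

theory Defs
  imports "HOL-Analysis.Analysis"
begin

definition l1 :: "(int \<Rightarrow> complex) set" where
  "l1 = {z. (\<lambda>j. norm (z j)) summable_on UNIV}"

definition l1norm :: "(int \<Rightarrow> complex) \<Rightarrow> real" where
  "l1norm z = (\<Sum>\<^sub>\<infinity>j\<in>UNIV. norm (z j))"

definition phi :: "int \<Rightarrow> real \<Rightarrow> complex" where
  "phi j t = exp (\<i> * of_int j * of_real pi * of_real t)"

definition Uop :: "(nat \<Rightarrow> real) \<Rightarrow> (int \<Rightarrow> complex) \<Rightarrow> nat \<Rightarrow> complex" where
  "Uop t z n = (\<Sum>\<^sub>\<infinity>j\<in>UNIV. z j * phi j (t n))"

definition is_l1_solution ::
  "nat \<Rightarrow> (nat \<Rightarrow> real) \<Rightarrow> (nat \<Rightarrow> complex) \<Rightarrow> (int \<Rightarrow> complex) \<Rightarrow> bool" where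
  "is_l1_solution N t y xh \<longleftrightarrow>
     xh \<in> l1 \<and> (\<forall>n\<in>{1..N}. Uop t xh n = y n) \<and>
     (\<forall>z\<in>l1. (\<forall>n\<in>{1..N}. Uop t z n = y n) \<longrightarrow> l1norm xh \<le> l1norm z)"

end

theory Submission
  imports Defs
begin

lemma shift_bij: "bij_betw (\<lambda>i::int. i - s) UNIV UNIV"
  by (rule bij_betwI[where g="\<lambda>i. i + s"]) auto

lemma shift_infsum: "infsum (\<lambda>i::int. f (i - s)) UNIV = infsum f UNIV"
  using infsum_reindex_bij_betw[OF shift_bij, of f s] by simp

lemma shift_summable: "(\<lambda>i::int. f (i - s)) summable_on UNIV \<longleftrightarrow> f summable_on UNIV"
  using summable_on_reindex_bij_betw[OF shift_bij, of f s] by simp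

lemma phi_shift:
  assumes "x * real P \<in> \<int>"
  shows "phi (j + 2 * k * int P) x = phi j x"
proof -
  obtain m :: int where m: "x * real P = of_int m" using assms Ints_cases by blast
  have cm: "complex_of_real x * of_nat P = of_int m"
    using arg_cong[OF m, of "\<lambda>r. complex_of_real r"] by simp
  have "\<i> * of_int (j + 2 * k * int P) * of_real pi * of_real x
        = \<i> * of_int j * of_real pi * of_real x + 2 * of_int k * pi * \<i> * (complex_of_real x * of_nat P)"
    by (simp add: algebra_simps)
  also have "\<dots> = \<i> * of_int j * of_real pi * of_real x + (2 * of_int (k*m) * pi) * \<i>"
    unfolding cm by (simp add: algebra_simps)
  finally have "\<i> * of_int (j + 2 * k * int P) * of_real pi * of_real x
        = \<i> * of_int j * of_real pi * of_real x + (2 * of_int (k*m) * pi) * \<i>" .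
  moreover have "exp ((2 * of_int (k*m) * pi) * \<i>) = 1"
    using exp_integer_2pi[of "of_int (k*m)"] by simp
  ultimately show ?thesis unfolding phi_def by (simp add: exp_add)
qed

theorem proposition4p1:
  fixes N P :: nat and t :: "nat \<Rightarrow> real" and y :: "nat \<Rightarrow> complex"
    and xh :: "int \<Rightarrow> complex" and k :: int
  assumes "\<forall>n\<in>{1..N}. t n \<in> {-1..1}"
    and "\<forall>n\<in>{1..N}. t n * real P \<in> \<int>"
    and "is_l1_solution N t y xh"
  shows "is_l1_solution N t y (\<lambda>i. xh (i - 2 * k * int P))"
proof -
  define s where "s = 2 * k * int P"
  have sol: "xh \<in> l1" "\<forall>n\<in>{1..N}. Uop t xh n = y n"
    "\<forall>z\<in>l1. (\<forall>n\<in>{1..N}. Uop t z n = y n) \<longrightarrow> l1norm xh \<le> l1norm z"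
    using assms(3) unfolding is_l1_solution_def by auto
  have l1: "(\<lambda>i. xh (i - s)) \<in> l1"
    using sol(1) shift_summable[of "\<lambda>j. norm (xh j)" s] unfolding l1_def by simp
  have nrm: "l1norm (\<lambda>i. xh (i - s)) = l1norm xh"
    unfolding l1norm_def using shift_infsum[of "\<lambda>j. norm (xh j)" s] by simp
  have U: "Uop t (\<lambda>i. xh (i - s)) n = y n" if n: "n \<in> {1..N}" for n
  proof -
    have "Uop t (\<lambda>i. xh (i - s)) n = infsum (\<lambda>i. (\<lambda>j. xh j * phi (j + s) (t n)) (i - s)) UNIV"
      unfolding Uop_def by simp
    also have "\<dots> = infsum (\<lambda>j. xh j * phi (j + s) (t n)) UNIV" by (rule shift_infsum)
    also have "\<dots> = Uop t xh n"
      unfolding Uop_def s_def using phi_shift[of "t n" P] assms(2) n by simp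
    finally show ?thesis using sol(2) n by simp
  qed
  show ?thesis unfolding s_def[symmetric] is_l1_solution_def
    using l1 U nrm sol(3) by auto
qed

end
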